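(* Let $p,p'$ be POPs of size $k$ and $q,q'$ be POPs of size $l$. If $p\sim p'$ and $q\sim q'$, then $p+q\sim p'+q'$.
   Context: A partially ordered pattern (POP) $p$ of size $k$ is a partial order $\le_p$ on $[k]=\{1,\dots,k\}$. A permutation $\pi=\pi_1\cdots\pi_n$ contains $p$ if there are indices $i_1<\dots<i_k$ with $\pi_{i_j}<\pi_{i_m}$ whenever $j<_p m$; otherwise it avoids $p$. $\mathfrak S_n(p)$ is the set of permutations of $[n]$ avoiding $p$, and $p\sim q$ (Wilf-equivalence) means $|\mathfrak S_n(p)|=|\mathfrak S_n(q)|$ for all $n\ge 1$. For a POP $p$ of size $k$ and a POP $q$ of size $l$, the disjoint sum $p+q$ is the POP of size $k+l$ on $[k+l]$ in which $i\le j$ for $i,j\in[k]$ iff $i\le_p j$, $k+i\le k+j$ for $i,j\in[l]$ iff $i\le_q j$, and no element of $[k]$ is comparable with an element of $[k+1,k+l]$. *)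

theory Defs
  imports "HOL-Combinatorics.Permutations"
begin

definition is_POP :: "nat \<Rightarrow> nat rel \<Rightarrow> bool" where
  "is_POP k p \<longleftrightarrow> p \<subseteq> {1..k} \<times> {1..k} \<and> partial_order_on {1..k} p"

definition contains_pop :: "nat \<Rightarrow> (nat \<Rightarrow> nat) \<Rightarrow> nat \<Rightarrow> nat rel \<Rightarrow> bool" where
  "contains_pop n \<pi> k p \<longleftrightarrow>
     (\<exists>idx :: nat \<Rightarrow> nat. strict_mono_on {1..k} idx \<and> idx ` {1..k} \<subseteq> {1..n} \<and>
        (\<forall>j\<in>{1..k}. \<forall>m\<in>{1..k}. (j, m) \<in> p \<and> j \<noteq> m \<longrightarrow> \<pi> (idx j) < \<pi> (idx m)))"

definition avoiders :: "nat \<Rightarrow> nat \<Rightarrow> nat rel \<Rightarrow> (nat \<Rightarrow> nat) set" where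
  "avoiders n k p = {\<pi>. \<pi> permutes {1..n} \<and> \<not> contains_pop n \<pi> k p}"

definition wilf_equiv :: "nat \<Rightarrow> nat rel \<Rightarrow> nat \<Rightarrow> nat rel \<Rightarrow> bool" where
  "wilf_equiv k p l q \<longleftrightarrow> (\<forall>n\<ge>1. card (avoiders n k p) = card (avoiders n l q))"

definition pop_sum :: "nat \<Rightarrow> nat rel \<Rightarrow> nat rel \<Rightarrow> nat rel" where
  "pop_sum k p q = p \<union> {(k + i, k + j) | i j. (i, j) \<in> q}"

end

theory Submission
  imports Defs
begin


definition contl :: "nat \<Rightarrow> nat rel \<Rightarrow> nat list \<Rightarrow> bool" where
 "contl k P xs \<longleftrightarrow> (\<exists>idx::nat\<Rightarrow>nat. strict_mono_on {1..k} idx \<and> idx ` {1..k} \<subseteq> {1..length xs} \<and>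
   (\<forall>j\<in>{1..k}. \<forall>m\<in>{1..k}. (j,m)\<in>P \<and> j\<noteq>m \<longrightarrow> xs!(idx j - 1) < xs!(idx m - 1)))"

lemma contains_conv: "contains_pop n \<pi> k P \<longleftrightarrow> contl k P (map \<pi> [1..<n+1])"
proof -
  have nth: "map \<pi> [1..<n+1] ! (i - 1) = \<pi> i" if "i \<in> {1..n}" for i
    using that by (subst nth_map) (auto simp del: upt_Suc)
  have key: "(\<forall>j\<in>{1..k}. \<forall>m\<in>{1..k}. (j,m)\<in>P \<and> j\<noteq>m \<longrightarrow> \<pi> (idx j) < \<pi> (idx m)) \<longleftrightarrow>
     (\<forall>j\<in>{1..k}. \<forall>m\<in>{1..k}. (j,m)\<in>P \<and> j\<noteq>m \<longrightarrow> map \<pi> [1..<n+1]!(idx j - 1) < map \<pi> [1..<n+1]!(idx m - 1))"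
    if "idx ` {1..k} \<subseteq> {1..n}" for idx
    using that nth by (auto simp: image_subset_iff)
  have len: "length (map \<pi> [1..<n+1]) = n" by simp
  show ?thesis unfolding contains_pop_def contl_def len using key by (auto simp del: upt_Suc)
qed

lemma contl_Nil: "k \<ge> 1 \<Longrightarrow> \<not> contl k P []"
  unfolding contl_def by (auto simp: image_subset_iff)

lemma contl_append1: "contl k P xs \<Longrightarrow> contl k P (xs @ ys)"
  unfolding contl_def
proof (elim exE conjE, intro exI conjI)
  fix idx assume a: "strict_mono_on {1..k} idx" "idx ` {1..k} \<subseteq> {1..length xs}"
    "\<forall>j\<in>{1..k}. \<forall>m\<in>{1..k}. (j,m)\<in>P \<and> j\<noteq>m \<longrightarrow> xs!(idx j - 1) < xs!(idx m - 1)"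
  show "strict_mono_on {1..k} idx" by fact
  show "idx ` {1..k} \<subseteq> {1..length (xs @ ys)}" using a(2) by auto
  have "(xs @ ys) ! (idx j - 1) = xs ! (idx j - 1)" if "j \<in> {1..k}" for j
  proof -
    have "idx j \<in> {1..length xs}" using a(2) that by blast
    then show ?thesis by (auto simp: nth_append)
  qed
  then show "\<forall>j\<in>{1..k}. \<forall>m\<in>{1..k}. (j,m)\<in>P \<and> j\<noteq>m \<longrightarrow> (xs@ys)!(idx j - 1) < (xs@ys)!(idx m - 1)"
    using a(3) by auto
qed

lemma contl_append2: "contl k P ys \<Longrightarrow> contl k P (xs @ ys)"
  unfolding contl_def
proof (elim exE conjE)
  fix idx assume a: "strict_mono_on {1..k} idx" "idx ` {1..k} \<subseteq> {1..length ys}"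
    "\<forall>j\<in>{1..k}. \<forall>m\<in>{1..k}. (j,m)\<in>P \<and> j\<noteq>m \<longrightarrow> ys!(idx j - 1) < ys!(idx m - 1)"
  let ?i = "\<lambda>j. idx j + length xs"
  have "strict_mono_on {1..k} ?i" using a(1) by (auto simp: strict_mono_on_def monotone_on_def)
  moreover have "?i ` {1..k} \<subseteq> {1..length (xs @ ys)}" using a(2) by auto
  moreover have "(xs @ ys) ! (?i j - 1) = ys ! (idx j - 1)" if "j \<in> {1..k}" for j
  proof -
    have "idx j \<in> {1..length ys}" using a(2) that by blast
    then have "idx j + length xs - 1 = length xs + (idx j - 1)" by auto
    then show ?thesis by (simp add: nth_append_length_plus)
  qed
  ultimately show "\<exists>idx. strict_mono_on {1..k} idx \<and> idx ` {1..k} \<subseteq> {1..length (xs @ ys)} \<and>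
   (\<forall>j\<in>{1..k}. \<forall>m\<in>{1..k}. (j,m)\<in>P \<and> j\<noteq>m \<longrightarrow> (xs@ys)!(idx j - 1) < (xs@ys)!(idx m - 1))"
    using a(3) by (intro exI[of _ ?i]) auto
qed

lemma contl_map:
  assumes "strict_mono_on (set xs) h"
  shows "contl k P (map h xs) \<longleftrightarrow> contl k P xs"
proof -
  have key: "(\<forall>j\<in>{1..k}. \<forall>m\<in>{1..k}. (j,m)\<in>P \<and> j\<noteq>m \<longrightarrow> xs!(idx j - 1) < xs!(idx m - 1)) \<longleftrightarrow>
     (\<forall>j\<in>{1..k}. \<forall>m\<in>{1..k}. (j,m)\<in>P \<and> j\<noteq>m \<longrightarrow> map h xs!(idx j - 1) < map h xs!(idx m - 1))"
    if "idx ` {1..k} \<subseteq> {1..length xs}" for idx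
  proof -
    have "map h xs ! (idx j - 1) = h (xs ! (idx j - 1)) \<and> xs ! (idx j - 1) \<in> set xs" if "j \<in> {1..k}" for j
    proof -
      have "idx j - 1 < length xs" using \<open>idx ` {1..k} \<subseteq> {1..length xs}\<close> that by force
      then show ?thesis by simp
    qed
    then show ?thesis using strict_mono_on_less[OF assms] by auto
  qed
  show ?thesis unfolding contl_def using key by auto
qed



lemma contl_split1:
  assumes k: "k \<ge> 1" and P: "P \<subseteq> {1..k} \<times> {1..k}" and Q: "Q \<subseteq> {1..l} \<times> {1..l}"
    and c: "contl (k+l) (pop_sum k P Q) xs"
  shows "\<exists>ys zs. xs = ys @ zs \<and> contl k P ys \<and> contl l Q zs"
proof -
  from c obtain idx where sm: "strict_mono_on {1..k+l} idx" and rg: "idx ` {1..k+l} \<subseteq> {1..length xs}"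
    and cd: "\<forall>j\<in>{1..k+l}. \<forall>m\<in>{1..k+l}. (j,m)\<in>pop_sum k P Q \<and> j\<noteq>m \<longrightarrow> xs!(idx j - 1) < xs!(idx m - 1)"
    unfolding contl_def by blast
  define c where "c = idx k"
  have rgj: "idx j \<in> {1..length xs}" if "j \<in> {1..k+l}" for j using rg that by blast
  have cle: "c \<le> length xs" using rgj[of k] k unfolding c_def by auto
  have lek: "idx j \<le> c" if "j \<in> {1..k}" for j
    using strict_mono_on_less_eq[OF sm, of j k] that k unfolding c_def by auto
  have gtk: "idx (k+i) > c" if "i \<in> {1..l}" for i
    using strict_mono_on_less[OF sm, of k "k+i"] that k unfolding c_def by auto
  have "contl k P (take c xs)"
    unfolding contl_def
  proof (intro exI conjI)
    show "strict_mono_on {1..k} idx" using sm by (rule monotone_on_subset) auto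
    show "idx ` {1..k} \<subseteq> {1..length (take c xs)}" proof
      fix x assume "x \<in> idx ` {1..k}"
      then obtain j where j: "j \<in> {1..k}" "x = idx j" by blast
      then show "x \<in> {1..length (take c xs)}" using lek[OF j(1)] rgj[of j] cle by auto
    qed
    have e: "take c xs ! (idx j - 1) = xs ! (idx j - 1)" if "j \<in> {1..k}" for j
      using lek[OF that] rgj[of j] that by auto
    show "\<forall>j\<in>{1..k}. \<forall>m\<in>{1..k}. (j,m)\<in>P \<and> j\<noteq>m \<longrightarrow> take c xs!(idx j - 1) < take c xs!(idx m - 1)"
    proof (intro ballI impI)
      fix j m assume jm: "j \<in> {1..k}" "m \<in> {1..k}" "(j,m)\<in>P \<and> j\<noteq>m"
      then have "(j,m) \<in> pop_sum k P Q" "j \<in> {1..k+l}" "m \<in> {1..k+l}" unfolding pop_sum_def by auto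
      then have "xs!(idx j - 1) < xs!(idx m - 1)" using cd jm by blast
      then show "take c xs!(idx j - 1) < take c xs!(idx m - 1)" using e jm by simp
    qed
  qed
  moreover have "contl l Q (drop c xs)"
    unfolding contl_def
  proof (intro exI conjI)
    let ?i = "\<lambda>i. idx (k+i) - c"
    show "strict_mono_on {1..l} ?i"
    proof (rule strict_mono_onI)
      fix r s assume "r \<in> {1..l}" "s \<in> {1..l}" "r < s"
      then show "?i r < ?i s" using strict_mono_onD[OF sm, of "k+r" "k+s"] gtk[of r] by auto
    qed
    show "?i ` {1..l} \<subseteq> {1..length (drop c xs)}" proof
      fix x assume "x \<in> ?i ` {1..l}"
      then obtain j where j: "j \<in> {1..l}" "x = ?i j" by blast
      then show "x \<in> {1..length (drop c xs)}" using gtk[OF j(1)] rgj[of "k+j"] cle by auto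
    qed
    have e: "drop c xs ! (?i j - 1) = xs ! (idx (k+j) - 1)" if "j \<in> {1..l}" for j
    proof -
      have "c + (?i j - 1) = idx (k+j) - 1" using gtk[OF that] by auto
      then show ?thesis using cle by (simp add: nth_drop)
    qed
    show "\<forall>j\<in>{1..l}. \<forall>m\<in>{1..l}. (j,m)\<in>Q \<and> j\<noteq>m \<longrightarrow> drop c xs!(?i j - 1) < drop c xs!(?i m - 1)"
    proof (intro ballI impI)
      fix j m assume jm: "j \<in> {1..l}" "m \<in> {1..l}" "(j,m)\<in>Q \<and> j\<noteq>m"
      then have "(k+j,k+m) \<in> pop_sum k P Q" unfolding pop_sum_def by auto
      then have "xs!(idx (k+j) - 1) < xs!(idx (k+m) - 1)" using cd jm by auto
      then show "drop c xs!(?i j - 1) < drop c xs!(?i m - 1)" using e jm by simp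
    qed
  qed
  ultimately show ?thesis by (intro exI[of _ "take c xs"] exI[of _ "drop c xs"]) auto
qed


lemma contl_split2:
  assumes P: "P \<subseteq> {1..k} \<times> {1..k}" and Q: "Q \<subseteq> {1..l} \<times> {1..l}"
    and c1: "contl k P ys" and c2: "contl l Q zs"
  shows "contl (k+l) (pop_sum k P Q) (ys @ zs)"
proof -
  from c1 obtain i1 where sm1: "strict_mono_on {1..k} i1" and rg1: "i1 ` {1..k} \<subseteq> {1..length ys}"
    and cd1: "\<forall>j\<in>{1..k}. \<forall>m\<in>{1..k}. (j,m)\<in>P \<and> j\<noteq>m \<longrightarrow> ys!(i1 j - 1) < ys!(i1 m - 1)"
    unfolding contl_def by blast
  from c2 obtain i2 where sm2: "strict_mono_on {1..l} i2" and rg2: "i2 ` {1..l} \<subseteq> {1..length zs}"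
    and cd2: "\<forall>j\<in>{1..l}. \<forall>m\<in>{1..l}. (j,m)\<in>Q \<and> j\<noteq>m \<longrightarrow> zs!(i2 j - 1) < zs!(i2 m - 1)"
    unfolding contl_def by blast
  define idx where "idx = (\<lambda>j. if j \<le> k then i1 j else i2 (j - k) + length ys)"
  have r1: "i1 j \<in> {1..length ys}" if "j \<in> {1..k}" for j using rg1 that by blast
  have r2: "i2 j \<in> {1..length zs}" if "j \<in> {1..l}" for j using rg2 that by blast
  have e1: "(ys@zs) ! (idx j - 1) = ys ! (i1 j - 1)" if "j \<in> {1..k}" for j
    using r1[OF that] that unfolding idx_def by (auto simp: nth_append)
  have e2: "(ys@zs) ! (idx (k+j) - 1) = zs ! (i2 j - 1)" if "j \<in> {1..l}" for j
  proof -
    have "idx (k+j) - 1 = length ys + (i2 j - 1)" using r2[OF that] that unfolding idx_def by auto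
    then show ?thesis by (simp add: nth_append_length_plus)
  qed
  show ?thesis unfolding contl_def
  proof (intro exI[of _ idx] conjI)
    show "strict_mono_on {1..k+l} idx"
    proof (rule strict_mono_onI)
      fix r s assume rs: "r \<in> {1..k+l}" "s \<in> {1..k+l}" "r < s"
      show "idx r < idx s"
      proof (cases "s \<le> k")
        case True then show ?thesis using rs strict_mono_onD[OF sm1, of r s] unfolding idx_def by auto
      next
        case False
        note F = False
        show ?thesis
        proof (cases "r \<le> k")
          case True
          have "s - k \<in> {1..l}" using F rs by auto
          then have "i2 (s-k) \<ge> 1" using r2 by auto
          then show ?thesis using True F rs r1[of r] unfolding idx_def by auto
        next
          case False then show ?thesis using F rs strict_mono_onD[OF sm2, of "r-k" "s-k"] unfolding idx_def by auto
        qed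
      qed
    qed
    show "idx ` {1..k+l} \<subseteq> {1..length (ys@zs)}"
    proof
      fix x assume "x \<in> idx ` {1..k+l}"
      then obtain j where j: "j \<in> {1..k+l}" "x = idx j" by blast
      then show "x \<in> {1..length (ys@zs)}"
      proof (cases "j \<le> k")
        case True then show ?thesis using j r1[of j] unfolding idx_def by auto
      next
        case False then have "j-k \<in> {1..l}" using j by auto
        then show ?thesis using r2[of "j-k"] j False unfolding idx_def by auto
      qed
    qed
    show "\<forall>j\<in>{1..k+l}. \<forall>m\<in>{1..k+l}. (j,m)\<in>pop_sum k P Q \<and> j\<noteq>m \<longrightarrow> (ys@zs)!(idx j - 1) < (ys@zs)!(idx m - 1)"
    proof (intro ballI impI)
      fix j m assume jm: "j \<in> {1..k+l}" "m \<in> {1..k+l}" "(j,m)\<in>pop_sum k P Q \<and> j\<noteq>m"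
      show "(ys@zs)!(idx j - 1) < (ys@zs)!(idx m - 1)"
      proof (cases "(j,m) \<in> P")
        case True
        then have "j \<in> {1..k}" "m \<in> {1..k}" using P by auto
        then show ?thesis using e1 cd1 True jm by auto
      next
        case False
        then obtain a b where ab: "j = k + a" "m = k + b" "(a,b) \<in> Q" using jm unfolding pop_sum_def by auto
        then have "a \<in> {1..l}" "b \<in> {1..l}" using Q by auto
        then show ?thesis using e2 cd2 ab jm by auto
      qed
    qed
  qed
qed



definition Ls :: "nat set \<Rightarrow> nat list set" where "Ls A = {xs. distinct xs \<and> set xs = A}"
definition Av :: "nat \<Rightarrow> nat rel \<Rightarrow> nat set \<Rightarrow> nat list set" where
  "Av k P A = {xs \<in> Ls A. \<not> contl k P xs}"
definition Mi :: "nat \<Rightarrow> nat rel \<Rightarrow> nat set \<Rightarrow> nat list set" where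
  "Mi k P A = {xs \<in> Ls A. xs \<noteq> [] \<and> contl k P xs \<and> \<not> contl k P (butlast xs)}"
definition sl :: "nat \<Rightarrow> nat rel \<Rightarrow> nat \<Rightarrow> nat" where "sl k P m = card (Av k P {1..m})"

lemma finite_Ls: "finite A \<Longrightarrow> finite (Ls A)"
proof -
  assume f: "finite A"
  have "Ls A \<subseteq> {xs. set xs \<subseteq> A \<and> length xs \<le> card A}"
    unfolding Ls_def using distinct_card by fastforce
  then show ?thesis using finite_lists_length_le[OF f] finite_subset by blast
qed

lemma order_iso:
  assumes f: "finite (A::nat set)"
  shows "\<exists>h. bij_betw h A {1..card A} \<and> strict_mono_on A h"
proof -
  define h where "h x = card {y\<in>A. y \<le> x}" for x
  have sm: "strict_mono_on A h"
  proof (rule strict_mono_onI)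
    fix r s assume rs: "r \<in> A" "s \<in> A" "r < s"
    have i1: "s \<in> {y\<in>A. y \<le> s}" and i2: "s \<notin> {y\<in>A. y \<le> r}" using rs by auto
    have ne: "{y\<in>A. y \<le> r} \<noteq> {y\<in>A. y \<le> s}" using i1 i2 by metis
    have "{y\<in>A. y \<le> r} \<subseteq> {y\<in>A. y \<le> s}" using rs by auto
    then have "{y\<in>A. y \<le> r} \<subset> {y\<in>A. y \<le> s}" using ne by blast
    moreover have "finite {y\<in>A. y \<le> s}" using f by auto
    ultimately show "h r < h s" unfolding h_def by (rule psubset_card_mono[rotated])
  qed
  have inj: "inj_on h A" using sm by (rule strict_mono_on_imp_inj_on)
  have sub: "h ` A \<subseteq> {1..card A}"
  proof
    fix z assume "z \<in> h ` A"
    then obtain x where x: "x \<in> A" "z = h x" by blast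
    have "x \<in> {y\<in>A. y \<le> x}" using x by auto
    then have "h x \<ge> 1" unfolding h_def using f
      by (metis (no_types, lifting) One_nat_def Suc_leI card_gt_0_iff empty_iff finite_subset mem_Collect_eq subsetI)
    moreover have "h x \<le> card A" unfolding h_def using f by (intro card_mono) auto
    ultimately show "z \<in> {1..card A}" using x by auto
  qed
  have "card (h ` A) = card {1..card A}" using card_image[OF inj] by simp
  then have "h ` A = {1..card A}" using sub by (intro card_subset_eq) auto
  then show ?thesis using inj sm unfolding bij_betw_def by blast
qed

lemma card_inv:
  assumes b: "bij_betw h A B" and sm: "strict_mono_on A h"
    and phi: "\<And>xs. set xs \<subseteq> A \<Longrightarrow> \<Phi> (map h xs) = \<Phi> xs"
  shows "card {xs\<in>Ls A. \<Phi> xs} = card {ys\<in>Ls B. \<Phi> ys}"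
proof -
  have inj: "inj_on h A" using b by (simp add: bij_betw_def)
  have img: "h ` A = B" using b by (simp add: bij_betw_def)
  define g where "g = the_inv_into A h"
  have gh: "g (h x) = x" if "x \<in> A" for x using the_inv_into_f_f[OF inj that] g_def by simp
  have hg: "h (g y) = y" if "y \<in> B" for y using f_the_inv_into_f[OF inj] that img g_def by auto
  have gB: "g ` B = A" using gh img by force
  have injg: "inj_on g B" using hg by (metis inj_on_inverseI)
  show ?thesis
  proof (rule bij_betw_same_card[of "map h"], rule bij_betw_byWitness[of _ "map g"])
    show "\<forall>a\<in>{xs\<in>Ls A. \<Phi> xs}. map g (map h a) = a"
      unfolding Ls_def using gh by (auto simp: map_idI)
    show "\<forall>a\<in>{ys\<in>Ls B. \<Phi> ys}. map h (map g a) = a"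
      unfolding Ls_def using hg by (auto simp: map_idI)
    show "map h ` {xs\<in>Ls A. \<Phi> xs} \<subseteq> {ys\<in>Ls B. \<Phi> ys}"
      unfolding Ls_def using inj img phi by (auto simp: distinct_map)
    show "map g ` {ys\<in>Ls B. \<Phi> ys} \<subseteq> {xs\<in>Ls A. \<Phi> xs}"
    proof
      fix xs assume "xs \<in> map g ` {ys\<in>Ls B. \<Phi> ys}"
      then obtain ys where ys: "ys \<in> Ls B" "\<Phi> ys" "xs = map g ys" by blast
      have s: "set xs = A" using ys gB unfolding Ls_def by auto
      have d: "distinct xs" using ys injg unfolding Ls_def by (auto simp: distinct_map)
      have "map h xs = ys" using ys hg unfolding Ls_def by (auto simp: map_idI)
      then have "\<Phi> xs" using phi[of xs] s ys by auto
      then show "xs \<in> {xs\<in>Ls A. \<Phi> xs}" using s d unfolding Ls_def by auto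
    qed
  qed
qed

lemma Av_card: assumes "finite A" shows "card (Av k P A) = sl k P (card A)"
proof -
  obtain h where h: "bij_betw h A {1..card A}" "strict_mono_on A h" using order_iso[OF assms] by blast
  have "card {xs\<in>Ls A. \<not> contl k P xs} = card {ys\<in>Ls {1..card A}. \<not> contl k P ys}"
    by (rule card_inv[OF h]) (simp add: contl_map monotone_on_subset[OF h(2)])
  then show ?thesis unfolding Av_def sl_def by simp
qed

lemma Mi_card: assumes "finite A" shows "card (Mi k P A) = card (Mi k P {1..card A})"
proof -
  obtain h where h: "bij_betw h A {1..card A}" "strict_mono_on A h" using order_iso[OF assms] by blast
  have "card {xs\<in>Ls A. xs \<noteq> [] \<and> contl k P xs \<and> \<not> contl k P (butlast xs)}
      = card {ys\<in>Ls {1..card A}. ys \<noteq> [] \<and> contl k P ys \<and> \<not> contl k P (butlast ys)}"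
  proof (rule card_inv[OF h])
    fix xs assume "set xs \<subseteq> A"
    moreover have "set (butlast xs) \<subseteq> set xs" by (rule in_set_butlastD[THEN subsetI])
    ultimately show "(map h xs \<noteq> [] \<and> contl k P (map h xs) \<and> \<not> contl k P (butlast (map h xs))) =
          (xs \<noteq> [] \<and> contl k P xs \<and> \<not> contl k P (butlast xs))"
      by (simp add: map_butlast[symmetric] contl_map monotone_on_subset[OF h(2)])
  qed
  then show ?thesis unfolding Mi_def by simp
qed



definition Fp :: "nat \<Rightarrow> nat rel \<Rightarrow> nat \<Rightarrow> nat" where
  "Fp k P m = (if m = 0 then 0 else m * sl k P (m - 1) - sl k P m)"

lemma contl_take: "contl k P (take n xs) \<Longrightarrow> contl k P xs"
  by (metis append_take_drop_id contl_append1)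

lemma contl_butlast: "\<not> contl k P xs \<Longrightarrow> \<not> contl k P (butlast xs)"
  by (metis butlast_conv_take contl_take)

lemma Mi_formula:
  assumes k: "k \<ge> 1" and f: "finite B"
  shows "card (Mi k P B) = Fp k P (card B)"
proof (cases "B = {}")
  case True
  then have "Mi k P B = {}" unfolding Mi_def Ls_def by auto
  then show ?thesis using True by (simp add: Fp_def)
next
  case False
  define U where "U = {xs\<in>Ls B. xs \<noteq> [] \<and> \<not> contl k P (butlast xs)}"
  have fU: "finite U" unfolding U_def using finite_Ls[OF f] by auto
  have sub: "Av k P B \<subseteq> U" unfolding U_def Av_def Ls_def using False contl_butlast by auto
  have MU: "Mi k P B = U - Av k P B" unfolding U_def Mi_def Av_def by auto
  have "bij_betw (\<lambda>xs. (last xs, butlast xs)) U (SIGMA x:B. Av k P (B - {x}))"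
  proof (rule bij_betw_byWitness[of _ "\<lambda>(x,ys). ys @ [x]"])
    show "\<forall>a\<in>U. (case (last a, butlast a) of (x, ys) \<Rightarrow> ys @ [x]) = a" unfolding U_def by auto
    show "\<forall>a\<in>(SIGMA x:B. Av k P (B - {x})). (last (case a of (x, ys) \<Rightarrow> ys @ [x]), butlast (case a of (x, ys) \<Rightarrow> ys @ [x])) = a"
      by auto
    show "(\<lambda>xs. (last xs, butlast xs)) ` U \<subseteq> (SIGMA x:B. Av k P (B - {x}))"
    proof
      fix z assume "z \<in> (\<lambda>xs. (last xs, butlast xs)) ` U"
      then obtain xs where xs: "xs \<in> U" "z = (last xs, butlast xs)" by blast
      have dx: "distinct xs" "set xs = B" "xs \<noteq> []" using xs(1) unfolding U_def Ls_def by auto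
      have d: "distinct (butlast xs @ [last xs])" using dx by simp
      have s: "set (butlast xs @ [last xs]) = B" using dx by simp
      have l: "last xs \<in> B" "set (butlast xs) = B - {last xs}" "distinct (butlast xs)" using d s by auto
      have "\<not> contl k P (butlast xs)" using xs(1) unfolding U_def by blast
      then have "butlast xs \<in> Av k P (B - {last xs})" using l unfolding Av_def Ls_def by blast
      then show "z \<in> (SIGMA x:B. Av k P (B - {x}))" using xs(2) l(1) by blast
    qed
    show "(\<lambda>(x,ys). ys @ [x]) ` (SIGMA x:B. Av k P (B - {x})) \<subseteq> U"
    proof
      fix z assume "z \<in> (\<lambda>(x,ys). ys @ [x]) ` (SIGMA x:B. Av k P (B - {x}))"
      then obtain x ys where z: "x \<in> B" "ys \<in> Av k P (B - {x})" "z = ys @ [x]" by auto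
      then have ys: "distinct ys" "set ys = B - {x}" "\<not> contl k P ys" unfolding Av_def Ls_def by blast+
      have "distinct z" "set z = B" "z \<noteq> []" "butlast z = ys" using z(1,3) ys(1,2) by auto
      then show "z \<in> U" unfolding U_def Ls_def using ys(3) by simp
    qed
  qed
  then have "card U = card (SIGMA x:B. Av k P (B - {x}))" by (rule bij_betw_same_card)
  also have "\<dots> = (\<Sum>x\<in>B. card (Av k P (B - {x})))" using f finite_Ls unfolding Av_def by (intro card_SigmaI) auto
  also have "\<dots> = (\<Sum>x\<in>B. sl k P (card B - 1))" using f by (intro sum.cong) (auto simp: Av_card)
  finally have cU: "card U = card B * sl k P (card B - 1)" by simp
  have "card (Mi k P B) = card U - card (Av k P B)" using MU sub fU by (simp add: card_Diff_subset finite_subset)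
  then show ?thesis using cU False f by (simp add: Fp_def Av_card)
qed



lemma prefix_contra:
  assumes c: "contl k P ys1" and ne: "ys2 \<noteq> []" and nb: "\<not> contl k P (butlast ys2)"
    and len: "length ys1 < length ys2" and eq: "ys1 @ zs1 = ys2 @ zs2"
  shows False
proof -
  have "ys1 = take (length ys1) (ys1 @ zs1)" by simp
  also have "\<dots> = take (length ys1) ys2" using eq len by simp
  also have "\<dots> = take (length ys1) (butlast ys2)" using len by (simp add: butlast_conv_take min_def; linarith)
  finally have "contl k P (take (length ys1) (butlast ys2))" using c by simp
  then show False using nb contl_take by blast
qed

lemma decomp:
  assumes k: "k \<ge> 1" and P: "P \<subseteq> {1..k} \<times> {1..k}" and Q: "Q \<subseteq> {1..l} \<times> {1..l}"
    and f: "finite A"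
  shows "card (Av (k+l) (pop_sum k P Q) A) =
         card (Av k P A) + (\<Sum>B\<in>Pow A. card (Mi k P B) * card (Av l Q (A - B)))"
proof -
  let ?R = "pop_sum k P Q"
  define T where "T = {xs\<in>Ls A. contl k P xs \<and> \<not> contl (k+l) ?R xs}"
  define S where "S = (\<Union>B\<in>Pow A. Mi k P B \<times> Av l Q (A - B))"
  have dec: "Av (k+l) ?R A = Av k P A \<union> T"
  proof
    show "Av (k+l) ?R A \<subseteq> Av k P A \<union> T" unfolding Av_def T_def by blast
    show "Av k P A \<union> T \<subseteq> Av (k+l) ?R A"
    proof
      fix xs assume "xs \<in> Av k P A \<union> T"
      then show "xs \<in> Av (k+l) ?R A"
      proof
        assume a: "xs \<in> Av k P A"
        have "\<not> contl (k+l) ?R xs"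
        proof
          assume "contl (k+l) ?R xs"
          then obtain ys zs where "xs = ys @ zs" "contl k P ys" using contl_split1[OF k P Q] by blast
          then have "contl k P xs" using contl_append1 by blast
          then show False using a unfolding Av_def by blast
        qed
        then show ?thesis using a unfolding Av_def by blast
      next
        assume "xs \<in> T" then show ?thesis unfolding Av_def T_def by blast
      qed
    qed
  qed
  have disj: "Av k P A \<inter> T = {}" unfolding Av_def T_def by blast
  have fT: "finite T" "finite (Av k P A)" using finite_Ls[OF f] unfolding T_def Av_def by auto
  have inj: "inj_on (\<lambda>(ys,zs). ys @ zs) S"
  proof (rule inj_onI)
    fix a b assume a: "a \<in> S" and b: "b \<in> S" and e: "(\<lambda>(ys,zs). ys @ zs) a = (\<lambda>(ys,zs). ys @ zs) b"
    obtain ys1 zs1 where a1: "a = (ys1, zs1)" by (cases a)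
    obtain ys2 zs2 where b1: "b = (ys2, zs2)" by (cases b)
    have m1: "ys1 \<noteq> []" "contl k P ys1" "\<not> contl k P (butlast ys1)" using a a1 unfolding S_def Mi_def by auto
    have m2: "ys2 \<noteq> []" "contl k P ys2" "\<not> contl k P (butlast ys2)" using b b1 unfolding S_def Mi_def by auto
    have eq: "ys1 @ zs1 = ys2 @ zs2" using e a1 b1 by simp
    have "\<not> length ys1 < length ys2" using prefix_contra[OF m1(2) m2(1,3) _ eq] by blast
    moreover have "\<not> length ys2 < length ys1" using prefix_contra[OF m2(2) m1(1,3) _ eq[symmetric]] by blast
    ultimately have "length ys1 = length ys2" by simp
    then show "a = b" using eq a1 b1 by simp
  qed
  have img: "(\<lambda>(ys,zs). ys @ zs) ` S = T"
  proof
    show "(\<lambda>(ys,zs). ys @ zs) ` S \<subseteq> T"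
    proof
      fix xs assume "xs \<in> (\<lambda>(ys,zs). ys @ zs) ` S"
      then obtain B ys zs where B: "B \<subseteq> A" "ys \<in> Mi k P B" "zs \<in> Av l Q (A - B)" "xs = ys @ zs"
        unfolding S_def by auto
      have ys: "distinct ys" "set ys = B" "ys \<noteq> []" "contl k P ys" "\<not> contl k P (butlast ys)"
        using B(2) unfolding Mi_def Ls_def by auto
      have zs: "distinct zs" "set zs = A - B" "\<not> contl l Q zs" using B(3) unfolding Av_def Ls_def by auto
      have L: "xs \<in> Ls A" using ys zs B(1,4) unfolding Ls_def by auto
      have C: "contl k P xs" using ys(4) B(4) contl_append1 by blast
      have N: "\<not> contl (k+l) ?R xs"
      proof
        assume "contl (k+l) ?R xs"
        then obtain ys' zs' where s: "xs = ys' @ zs'" "contl k P ys'" "contl l Q zs'"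
          using contl_split1[OF k P Q] by blast
        have eq: "ys' @ zs' = ys @ zs" using s B(4) by simp
        have "\<not> length ys' < length ys" using prefix_contra[OF s(2) ys(3,5) _ eq] by blast
        then have "zs = drop (length ys) ys' @ zs'"
        proof -
          assume "\<not> length ys' < length ys"
          have "zs = drop (length ys) (ys @ zs)" by simp
          also have "\<dots> = drop (length ys) (ys' @ zs')" using eq by simp
          also have "\<dots> = drop (length ys) ys' @ zs'" using \<open>\<not> length ys' < length ys\<close> by simp
          finally show ?thesis .
        qed
        then have "contl l Q zs" using s(3) contl_append2 by metis
        then show False using zs(3) by blast
      qed
      show "xs \<in> T" using L C N unfolding T_def by blast
    qed
    show "T \<subseteq> (\<lambda>(ys,zs). ys @ zs) ` S"
    proof
      fix xs assume xT: "xs \<in> T"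
      then have xs: "distinct xs" "set xs = A" "contl k P xs" "\<not> contl (k+l) ?R xs"
        unfolding T_def Ls_def by auto
      define i where "i = (LEAST i. contl k P (take i xs))"
      have ex: "contl k P (take (length xs) xs)" using xs(3) by simp
      have ci: "contl k P (take i xs)" unfolding i_def using ex by (rule LeastI)
      have ile: "i \<le> length xs" unfolding i_def using ex by (rule Least_le)
      have i0: "i \<noteq> 0" proof
        assume "i = 0" then show False using ci contl_Nil[OF k] by simp
      qed
      have nb: "\<not> contl k P (take (i - 1) xs)" using not_less_Least[of "i - 1" "\<lambda>i. contl k P (take i xs)"] i0
        unfolding i_def by auto
      define ys where "ys = take i xs"
      define zs where "zs = drop i xs"
      have xyz: "xs = ys @ zs" unfolding ys_def zs_def by simp
      have dis: "set ys \<inter> set zs = {}" using xs(1) unfolding ys_def zs_def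
        by (rule set_take_disj_set_drop_if_distinct) simp
      have un: "set ys \<union> set zs = A" using xs(2) xyz by (metis set_append)
      have ysM: "ys \<in> Mi k P (set ys)" unfolding Mi_def Ls_def ys_def
        using xs(1) ci nb i0 ile by (auto simp: butlast_take)
      have zsA: "zs \<in> Av l Q (A - set ys)"
      proof -
        have "\<not> contl l Q zs"
        proof
          assume "contl l Q zs"
          then have "contl (k+l) ?R (ys @ zs)" using contl_split2[OF P Q] ci unfolding ys_def by blast
          then show False using xs(4) xyz by simp
        qed
        moreover have "distinct zs" using xs(1) unfolding zs_def by simp
        moreover have "set zs = A - set ys" using dis un by blast
        ultimately show ?thesis unfolding Av_def Ls_def by blast
      qed
      have "set ys \<in> Pow A" using un by blast
      then have "(ys, zs) \<in> S" using ysM zsA unfolding S_def by blast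
      then show "xs \<in> (\<lambda>(ys,zs). ys @ zs) ` S" using xyz by force
    qed
  qed
  have cS: "card S = (\<Sum>B\<in>Pow A. card (Mi k P B) * card (Av l Q (A - B)))"
    unfolding S_def
  proof (subst card_UN_disjoint)
    show "finite (Pow A)" using f by simp
    show "\<forall>B\<in>Pow A. finite (Mi k P B \<times> Av l Q (A - B))"
    proof
      fix B assume "B \<in> Pow A"
      then have "finite B" "finite (A - B)" using f finite_subset by auto
      then show "finite (Mi k P B \<times> Av l Q (A - B))" using finite_Ls unfolding Mi_def Av_def by auto
    qed
    show "\<forall>i\<in>Pow A. \<forall>j\<in>Pow A. i \<noteq> j \<longrightarrow> (Mi k P i \<times> Av l Q (A - i)) \<inter> (Mi k P j \<times> Av l Q (A - j)) = {}"
      unfolding Mi_def Ls_def by auto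
    show "(\<Sum>i\<in>Pow A. card (Mi k P i \<times> Av l Q (A - i))) = (\<Sum>B\<in>Pow A. card (Mi k P B) * card (Av l Q (A - B)))"
      by (simp add: card_cartesian_product)
  qed
  have "card T = card S" using card_image[OF inj] img by simp
  then show ?thesis using dec disj fT cS by (simp add: card_Un_disjoint)
qed



lemma avoiders_card: "card (avoiders n k P) = sl k P n"
proof -
  define g where "g xs = (\<lambda>i. if i \<in> {1..n} then xs ! (i - 1) else i)" for xs :: "nat list"
  have setu: "set [1..<n+1] = {1..n}" by auto
  have nthm: "map \<pi> [1..<n+1] ! (i - 1) = \<pi> i" if "i \<in> {1..n}" for i and \<pi> :: "nat \<Rightarrow> nat"
    using that by (subst nth_map) (auto simp del: upt_Suc)
  have lenAv: "length xs = n" if "xs \<in> Ls {1..n}" for xs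
    using that distinct_card[of xs] unfolding Ls_def by auto
  have mapg: "map (g xs) [1..<n+1] = xs" if "xs \<in> Ls {1..n}" for xs
  proof (rule nth_equalityI)
    show "length (map (g xs) [1..<n+1]) = length xs" using lenAv[OF that] by simp
    fix j assume "j < length (map (g xs) [1..<n+1])"
    then have j: "j < n" by (simp del: upt_Suc)
    then have "map (g xs) [1..<n+1] ! j = g xs (j + 1)" by (subst nth_map) (auto simp del: upt_Suc)
    then show "map (g xs) [1..<n+1] ! j = xs ! j" using j unfolding g_def by simp
  qed
  have "bij_betw (\<lambda>\<pi>. map \<pi> [1..<n+1]) (avoiders n k P) (Av k P {1..n})"
  proof (rule bij_betw_byWitness[of _ g])
    show "\<forall>a\<in>avoiders n k P. g (map a [1..<n+1]) = a"
    proof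
      fix \<pi> assume "\<pi> \<in> avoiders n k P"
      then have p: "\<pi> permutes {1..n}" unfolding avoiders_def by blast
      show "g (map \<pi> [1..<n+1]) = \<pi>"
      proof
        fix i show "g (map \<pi> [1..<n+1]) i = \<pi> i"
          using nthm[of i \<pi>] permutes_not_in[OF p, of i] unfolding g_def by auto
      qed
    qed
    show "\<forall>a\<in>Av k P {1..n}. map (g a) [1..<n+1] = a" using mapg unfolding Av_def by blast
    show "(\<lambda>\<pi>. map \<pi> [1..<n+1]) ` avoiders n k P \<subseteq> Av k P {1..n}"
    proof
      fix xs assume "xs \<in> (\<lambda>\<pi>. map \<pi> [1..<n+1]) ` avoiders n k P"
      then obtain \<pi> where p: "\<pi> permutes {1..n}" "\<not> contains_pop n \<pi> k P" "xs = map \<pi> [1..<n+1]"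
        unfolding avoiders_def by blast
      have "distinct xs" using p(3) permutes_inj_on[OF p(1)] by (simp add: distinct_map del: upt_Suc)
      moreover have "set xs = {1..n}" using p(3) permutes_image[OF p(1)] setu by (simp del: upt_Suc)
      moreover have "\<not> contl k P xs" using p(2,3) contains_conv by blast
      ultimately show "xs \<in> Av k P {1..n}" unfolding Av_def Ls_def by blast
    qed
    show "g ` Av k P {1..n} \<subseteq> avoiders n k P"
    proof
      fix \<pi> assume "\<pi> \<in> g ` Av k P {1..n}"
      then obtain xs where xs: "xs \<in> Ls {1..n}" "\<not> contl k P xs" "\<pi> = g xs" unfolding Av_def by blast
      have len: "length xs = n" using lenAv[OF xs(1)] .
      have d: "distinct xs" "set xs = {1..n}" using xs(1) unfolding Ls_def by auto
      have inj: "inj_on \<pi> {1..n}"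
      proof (rule inj_onI)
        fix a b assume "a \<in> {1..n}" "b \<in> {1..n}" "\<pi> a = \<pi> b"
        then have "xs ! (a - 1) = xs ! (b - 1)" "a - 1 < length xs" "b - 1 < length xs"
          using xs(3) len unfolding g_def by auto
        then have "a - 1 = b - 1" using d(1) nth_eq_iff_index_eq by blast
        then show "a = b" using \<open>a \<in> {1..n}\<close> \<open>b \<in> {1..n}\<close> by auto
      qed
      have im: "\<pi> ` {1..n} = {1..n}"
      proof -
        have "\<pi> ` {1..n} = (\<lambda>i. xs ! (i - 1)) ` {1..n}" using xs(3) unfolding g_def by auto
        also have "\<dots> = (\<lambda>j. xs ! j) ` {..<n}"
        proof
          show "(\<lambda>i. xs ! (i - 1)) ` {1..n} \<subseteq> (!) xs ` {..<n}" by force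
          show "(!) xs ` {..<n} \<subseteq> (\<lambda>i. xs ! (i - 1)) ` {1..n}"
          proof
            fix y assume "y \<in> (!) xs ` {..<n}"
            then obtain j where "j < n" "y = xs ! j" by blast
            then show "y \<in> (\<lambda>i. xs ! (i - 1)) ` {1..n}" by (intro image_eqI[of _ _ "j+1"]) auto
          qed
        qed
        also have "\<dots> = set xs" using len by (auto simp: set_conv_nth)
        finally show ?thesis using d(2) by simp
      qed
      have "\<pi> permutes {1..n}"
        by (rule bij_imp_permutes) (use inj im xs(3) in \<open>auto simp: bij_betw_def g_def\<close>)
      moreover have "\<not> contains_pop n \<pi> k P" using contains_conv xs(2,3) mapg[OF xs(1)] by simp
      ultimately show "\<pi> \<in> avoiders n k P" unfolding avoiders_def by blast
    qed
  qed
  then show ?thesis unfolding sl_def by (rule bij_betw_same_card)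
qed

lemma formula:
  assumes k: "k \<ge> 1" and P: "P \<subseteq> {1..k} \<times> {1..k}" and Q: "Q \<subseteq> {1..l} \<times> {1..l}"
  shows "card (avoiders n (k+l) (pop_sum k P Q)) =
     sl k P n + (\<Sum>B\<in>Pow {1..n}. Fp k P (card B) * sl l Q (card ({1..n} - B)))"
proof -
  have "card (avoiders n (k+l) (pop_sum k P Q)) = card (Av (k+l) (pop_sum k P Q) {1..n})"
    using avoiders_card unfolding sl_def by simp
  also have "\<dots> = card (Av k P {1..n}) + (\<Sum>B\<in>Pow {1..n}. card (Mi k P B) * card (Av l Q ({1..n} - B)))"
    by (rule decomp[OF k P Q]) simp
  also have "\<dots> = sl k P n + (\<Sum>B\<in>Pow {1..n}. Fp k P (card B) * sl l Q (card ({1..n} - B)))"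
  proof -
    have "card (Av k P {1..n}) = sl k P n" unfolding sl_def ..
    moreover have "(\<Sum>B\<in>Pow {1..n}. card (Mi k P B) * card (Av l Q ({1..n} - B))) =
        (\<Sum>B\<in>Pow {1..n}. Fp k P (card B) * sl l Q (card ({1..n} - B)))"
    proof (rule sum.cong)
      fix B assume "B \<in> Pow {1..n}"
      then have "finite B" by (auto intro: finite_subset)
      then show "card (Mi k P B) * card (Av l Q ({1..n} - B)) = Fp k P (card B) * sl l Q (card ({1..n} - B))"
        using Mi_formula[OF k] Av_card by simp
    qed simp
    ultimately show ?thesis by simp
  qed
  finally show ?thesis .
qed

lemma sl_zero: "k \<ge> 1 \<Longrightarrow> sl k P 0 = 1"
proof -
  assume k: "k \<ge> 1"
  have "Ls {} = {[]}" unfolding Ls_def by auto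
  then have "Av k P {1..0} = {[]}" unfolding Av_def using contl_Nil[OF k] by auto
  then show ?thesis unfolding sl_def by simp
qed

lemma sl_eq:
  assumes "k \<ge> 1" "wilf_equiv k p k p'"
  shows "sl k p m = sl k p' m"
proof (cases "m = 0")
  case True then show ?thesis using sl_zero assms(1) by simp
next
  case False then show ?thesis using assms(2) avoiders_card unfolding wilf_equiv_def by (metis less_one not_le)
qed

theorem theorem1p4:
  fixes k l :: nat and p p' q q' :: "nat rel"
  assumes "is_POP k p" and "is_POP k p'" and "is_POP l q" and "is_POP l q'"
    and "wilf_equiv k p k p'" and "wilf_equiv l q l q'"
  shows "wilf_equiv (k + l) (pop_sum k p q) (k + l) (pop_sum k p' q')"
proof -
  have P: "p \<subseteq> {1..k} \<times> {1..k}" "p' \<subseteq> {1..k} \<times> {1..k}" and Q: "q \<subseteq> {1..l} \<times> {1..l}" "q' \<subseteq> {1..l} \<times> {1..l}"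
    using assms(1-4) unfolding is_POP_def by auto
  show ?thesis
  proof (cases "k = 0")
    case True
    then have "p = {}" "p' = {}" using P by auto
    then have "pop_sum k p q = q" "pop_sum k p' q' = q'" using True unfolding pop_sum_def by auto
    then show ?thesis using assms(6) True by simp
  next
    case k: False
    show ?thesis
    proof (cases "l = 0")
      case True
      then have "q = {}" "q' = {}" using Q by auto
      then have "pop_sum k p q = p" "pop_sum k p' q' = p'" unfolding pop_sum_def by auto
      then show ?thesis using assms(5) True by simp
    next
      case l: False
      have k1: "k \<ge> 1" and l1: "l \<ge> 1" using k l by auto
      have sp: "sl k p = sl k p'" using sl_eq[OF k1 assms(5)] by auto
      have sq: "sl l q = sl l q'" using sl_eq[OF l1 assms(6)] by auto
      have fp: "Fp k p = Fp k p'" unfolding Fp_def sp ..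
      show ?thesis unfolding wilf_equiv_def
        using formula[OF k1 P(1) Q(1)] formula[OF k1 P(2) Q(2)] sp sq fp by simp
    qed
  qed
qed

end
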